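(* For each random forest with majority voting there exists an equivalent boosted tree ensemble (i.e., one computing the same classification function) whose size is polynomial in the size of the starting random forest.
   Context: Features $\mathcal{F}$ with domains $D_i$, feature space $\mathbb{F}=\prod_i D_i$, finite class set $\mathcal{K}$. A decision tree is a binary rooted tree with internal nodes labeled by split conditions $x_i<d$; each point reaches a unique leaf. A random forest with majority voting has leaves labeled by classes and predicts the class voted by the largest number of trees. A boosted tree ensemble consists of decision trees partitioned into groups, one per class, each leaf carrying a real weight; the score of a class at $\mathbf{x}$ is the sum of the weights of the leaves reached by $\mathbf{x}$ in the trees of that class's group, and the prediction is a class of maximal score. Size is measured as the total number of tree nodes. *)

theory Defs
  imports Main "HOL-Computational_Algebra.Polynomial"
begin

datatype ('f, 'v, 'l) dtree =
    Leaf 'l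
  | Node 'f 'v "('f, 'v, 'l) dtree" "('f, 'v, 'l) dtree"

fun dt_eval :: "('f, 'v::linorder, 'l) dtree \<Rightarrow> ('f \<Rightarrow> 'v) \<Rightarrow> 'l" where
  "dt_eval (Leaf c) x = c"
| "dt_eval (Node i d l r) x = (if x i < d then dt_eval l x else dt_eval r x)"

fun dt_size :: "('f, 'v, 'l) dtree \<Rightarrow> nat" where
  "dt_size (Leaf c) = 1"
| "dt_size (Node i d l r) = 1 + dt_size l + dt_size r"

fun dt_leaves :: "('f, 'v, 'l) dtree \<Rightarrow> 'l set" where
  "dt_leaves (Leaf c) = {c}"
| "dt_leaves (Node i d l r) = dt_leaves l \<union> dt_leaves r"

definition feature_space :: "('f \<Rightarrow> 'v set) \<Rightarrow> ('f \<Rightarrow> 'v) set" where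
  "feature_space D = {x. \<forall>i. x i \<in> D i}"

type_synonym ('f, 'v, 'k) rforest = "('f, 'v, 'k) dtree list"

definition rf_votes :: "('f, 'v::linorder, 'k) rforest \<Rightarrow> ('f \<Rightarrow> 'v) \<Rightarrow> 'k \<Rightarrow> nat" where
  "rf_votes F x k = length (filter (\<lambda>t. dt_eval t x = k) F)"

definition rf_classify :: "'k set \<Rightarrow> ('f, 'v::linorder, 'k) rforest \<Rightarrow> ('f \<Rightarrow> 'v) \<Rightarrow> 'k set" where
  "rf_classify K F x = {k \<in> K. \<forall>k' \<in> K. rf_votes F x k' \<le> rf_votes F x k}"

definition rf_size :: "('f, 'v, 'k) rforest \<Rightarrow> nat" where
  "rf_size F = (\<Sum>t\<leftarrow>F. dt_size t)"

definition rf_wf :: "'k set \<Rightarrow> ('f, 'v, 'k) rforest \<Rightarrow> bool" where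
  "rf_wf K F \<longleftrightarrow> (\<forall>t \<in> set F. dt_leaves t \<subseteq> K)"

type_synonym ('f, 'v, 'k) bensemble = "'k \<Rightarrow> ('f, 'v, real) dtree list"

definition bt_score :: "('f, 'v::linorder, 'k) bensemble \<Rightarrow> ('f \<Rightarrow> 'v) \<Rightarrow> 'k \<Rightarrow> real" where
  "bt_score B x k = (\<Sum>t\<leftarrow>B k. dt_eval t x)"

definition bt_classify :: "'k set \<Rightarrow> ('f, 'v::linorder, 'k) bensemble \<Rightarrow> ('f \<Rightarrow> 'v) \<Rightarrow> 'k set" where
  "bt_classify K B x = {k \<in> K. \<forall>k' \<in> K. bt_score B x k' \<le> bt_score B x k}"

definition bt_wf :: "'k set \<Rightarrow> ('f, 'v, 'k) bensemble \<Rightarrow> bool" where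
  "bt_wf K B \<longleftrightarrow> (\<forall>k. k \<notin> K \<longrightarrow> B k = [])"

definition bt_size :: "'k set \<Rightarrow> ('f, 'v, 'k) bensemble \<Rightarrow> nat" where
  "bt_size K B = (\<Sum>k\<in>K. \<Sum>t\<leftarrow>B k. dt_size t)"

end

theory Submission
  imports Defs
begin

fun relab :: "'k \<Rightarrow> ('f, 'v, 'k) dtree \<Rightarrow> ('f, 'v, real) dtree" where
  "relab k (Leaf c) = Leaf (if c = k then 1 else 0)"
| "relab k (Node i d l r) = Node i d (relab k l) (relab k r)"

lemma relab_size: "dt_size (relab k t) = dt_size t"
  by (induction t) auto

lemma relab_eval: "dt_eval (relab k t) x = (if dt_eval t x = k then 1 else 0)"
  by (induction t) auto

lemma eval_in_leaves: "dt_eval t x \<in> dt_leaves t"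
  by (induction t) auto

lemma leaves_finite: "finite (dt_leaves t)"
  by (induction t) auto

lemma leaves_card: "card (dt_leaves t) \<le> dt_size t"
  by (induction t) (auto intro: order_trans[OF card_Un_le])

lemma forest_leaves_finite: "finite (\<Union>t\<in>set F. dt_leaves t)"
  by (auto simp: leaves_finite)

lemma forest_leaves_card: "card (\<Union>t\<in>set F. dt_leaves t) \<le> rf_size F"
proof (induction F)
  case Nil then show ?case by (simp add: rf_size_def)
next
  case (Cons t F)
  have "card (\<Union>s\<in>set (t # F). dt_leaves s) \<le> card (dt_leaves t) + card (\<Union>s\<in>set F. dt_leaves s)"
    by (simp add: card_Un_le)
  also have "\<dots> \<le> dt_size t + rf_size F" using Cons leaves_card add_mono by blast
  finally show ?case by (simp add: rf_size_def)
qed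

lemma sum_ind: "(\<Sum>t\<leftarrow>F. (if dt_eval t x = k then 1 else 0 :: real)) = real (length (filter (\<lambda>t. dt_eval t x = k) F))"
  by (induction F) auto

lemma sum_size: "sum_list (map (dt_size \<circ> relab k) F) = rf_size F"
  by (induction F) (auto simp: rf_size_def relab_size)

theorem mainTheorem4:
  "\<exists>p :: nat poly. \<forall>(K :: 'k set) (D :: 'f \<Rightarrow> 'v::linorder set) (F :: ('f, 'v, 'k) rforest).
     finite K \<and> K \<noteq> {} \<and> rf_wf K F \<longrightarrow>
     (\<exists>B :: ('f, 'v, 'k) bensemble.
        bt_wf K B \<and>
        bt_size K B \<le> poly p (rf_size F) \<and>
        (\<forall>x \<in> feature_space D. bt_classify K B x = rf_classify K F x))"
proof (intro exI[of _ "[:0, 0, 1:]"] allI impI)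
  fix K :: "'k set" and D :: "'f \<Rightarrow> 'v::linorder set" and F :: "('f, 'v, 'k) rforest"
  assume A: "finite K \<and> K \<noteq> {} \<and> rf_wf K F"
  define L where "L = (\<Union>t\<in>set F. dt_leaves t)"
  have LK: "L \<subseteq> K" using A by (auto simp: L_def rf_wf_def)
  define B :: "('f, 'v, 'k) bensemble" where "B = (\<lambda>k. if k \<in> L then map (relab k) F else [])"
  have wf: "bt_wf K B" using LK by (auto simp: bt_wf_def B_def)
  have "bt_size K B = (\<Sum>k\<in>K. if k \<in> L then rf_size F else 0)"
    unfolding bt_size_def B_def by (intro sum.cong) (auto simp: sum_size)
  also have "\<dots> = (\<Sum>k\<in>L. rf_size F)"
    using A LK by (simp add: sum.If_cases Int_absorb1 inf.absorb2)
  also have "\<dots> = card L * rf_size F" by simp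
  also have "\<dots> \<le> rf_size F * rf_size F"
    using forest_leaves_card[of F] by (simp add: L_def)
  finally have sz: "bt_size K B \<le> poly [:0, 0, 1:] (rf_size F)" by simp
  have sc: "bt_score B x k = real (rf_votes F x k)" for x k
  proof (cases "k \<in> L")
    case True
    then show ?thesis
      by (simp add: bt_score_def B_def rf_votes_def relab_eval o_def sum_ind)
  next
    case False
    then have "filter (\<lambda>t. dt_eval t x = k) F = []"
      using eval_in_leaves by (fastforce simp: L_def filter_empty_conv)
    then show ?thesis using False by (simp add: bt_score_def B_def rf_votes_def)
  qed
  have "\<forall>x \<in> feature_space D. bt_classify K B x = rf_classify K F x"
    by (simp add: bt_classify_def rf_classify_def sc)
  then show "\<exists>B :: ('f, 'v, 'k) bensemble. bt_wf K B \<and> bt_size K B \<le> poly [:0, 0, 1:] (rf_size F) \<and>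
        (\<forall>x \<in> feature_space D. bt_classify K B x = rf_classify K F x)"
    using wf sz by blast
qed

end
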